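(* Let $(X,f)$ be a dynamical system. Then (1) $(X,f)$ is weakly mixing if and only if it is $\nabla(\mathcal{F}_t)$-point transitive; (2) $(X,f)$ is strongly mixing if and only if it is $\nabla(\mathcal{F}_{cf})$-point transitive.
   Context: A dynamical system is a pair $(X,f)$ with $X$ a compact metric space and $f:X\to X$ continuous. $\mathbb{N}=\{1,2,\dots\}$. For $U,V\subset X$ and $x\in X$: $N(U,V)=\{n\in\mathbb{N}: U\cap f^{-n}(V)\neq\emptyset\}$ and $N(x,U)=\{n\in\mathbb{N}: f^n(x)\in U\}$. $(X,f)$ is weakly mixing if $(X\times X,f\times f)$ is transitive (i.e. hitting time sets of non-empty open sets are non-empty), and strongly mixing if $N(U,V)$ is cofinite for all non-empty open $U,V\subset X$. $\mathcal{F}_t$ is the family of thick sets: $F\subset\mathbb{N}$ such that for every $n$ there is $a\in\mathbb{N}$ with $\{a,a+1,\dots,a+n\}\subset F$. $\mathcal{F}_{cf}$ is the family of cofinite subsets of $\mathbb{N}$. For a family $\mathcal{F}$ of subsets of $\mathbb{N}$, a point $x$ is an $\mathcal{F}$-transitive point if $N(x,U)\in\mathcal{F}$ for every non-empty open $U\subset X$, and $(X,f)$ is $\mathcal{F}$-point transitive if such a point exists. For $F\subset\mathbb{N}$, $F-F=\{a-b: a,b\in F,\ a>b\}$, and $\nabla(\mathcal{F})=\{F\subset\mathbb{N}: F-F\in\mathcal{F}\}$. *)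

theory Defs
  imports "HOL-Analysis.Analysis"
begin

definition posnat :: "nat set" where
  "posnat = {n. 1 \<le> n}"

definition hit_UV :: "('a \<Rightarrow> 'a) \<Rightarrow> 'a set \<Rightarrow> 'a set \<Rightarrow> nat set" where
  "hit_UV f U V = {n. 1 \<le> n \<and> (\<exists>x\<in>U. (f ^^ n) x \<in> V)}"

definition hit_xU :: "('a \<Rightarrow> 'a) \<Rightarrow> 'a \<Rightarrow> 'a set \<Rightarrow> nat set" where
  "hit_xU f x U = {n. 1 \<le> n \<and> (f ^^ n) x \<in> U}"

definition top_transitive :: "'a::topological_space set \<Rightarrow> ('a \<Rightarrow> 'a) \<Rightarrow> bool" where
  "top_transitive S g \<longleftrightarrow>
     (\<forall>U V. openin (top_of_set S) U \<and> U \<noteq> {} \<and> openin (top_of_set S) V \<and> V \<noteq> {}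
        \<longrightarrow> hit_UV g U V \<noteq> {})"

definition weakly_mixing :: "'a::topological_space set \<Rightarrow> ('a \<Rightarrow> 'a) \<Rightarrow> bool" where
  "weakly_mixing X f \<longleftrightarrow> top_transitive (X \<times> X) (\<lambda>(x, y). (f x, f y))"

definition thick_family :: "nat set set" where
  "thick_family = {F. F \<subseteq> posnat \<and> (\<forall>n. \<exists>a\<in>posnat. {a..a+n} \<subseteq> F)}"

definition cofinite_family :: "nat set set" where
  "cofinite_family = {F. F \<subseteq> posnat \<and> finite (posnat - F)}"

definition strongly_mixing :: "'a::topological_space set \<Rightarrow> ('a \<Rightarrow> 'a) \<Rightarrow> bool" where
  "strongly_mixing X f \<longleftrightarrow>
     (\<forall>U V. openin (top_of_set X) U \<and> U \<noteq> {} \<and> openin (top_of_set X) V \<and> V \<noteq> {}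
        \<longrightarrow> hit_UV f U V \<in> cofinite_family)"

definition diff_set :: "nat set \<Rightarrow> nat set" where
  "diff_set F = {a - b | a b. a \<in> F \<and> b \<in> F \<and> a > b}"

definition nabla :: "nat set set \<Rightarrow> nat set set" where
  "nabla Fam = {F. F \<subseteq> posnat \<and> diff_set F \<in> Fam}"

definition F_transitive_point :: "'a::topological_space set \<Rightarrow> ('a \<Rightarrow> 'a) \<Rightarrow> nat set set \<Rightarrow> 'a \<Rightarrow> bool" where
  "F_transitive_point X f Fam x \<longleftrightarrow>
     (\<forall>U. openin (top_of_set X) U \<and> U \<noteq> {} \<longrightarrow> hit_xU f x U \<in> Fam)"

definition F_point_transitive :: "'a::topological_space set \<Rightarrow> ('a \<Rightarrow> 'a) \<Rightarrow> nat set set \<Rightarrow> bool" where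
  "F_point_transitive X f Fam \<longleftrightarrow> (\<exists>x\<in>X. F_transitive_point X f Fam x)"

end

theory Submission
  imports Defs
begin

locale dsys =
  fixes X :: "'a::metric_space set" and f :: "'a \<Rightarrow> 'a"
  assumes cont: "continuous_on X f" and img: "f ` X \<subseteq> X"
begin

lemma fin: "x \<in> X \<Longrightarrow> (f^^n) x \<in> X"
  using img by (induction n) auto

lemma fcont: "continuous_on X (f^^n)"
proof (induction n)
  case 0 then show ?case by (simp add: continuous_on_id)
next
  case (Suc n)
  have "continuous_on X (\<lambda>x. f ((f^^n) x))"
    by (rule continuous_on_compose2[OF cont Suc]) (auto intro: fin)
  then show ?case by simp
qed

lemma pre_open:
  assumes "openin (top_of_set X) U"
  shows "openin (top_of_set X) {y\<in>X. (f^^n) y \<in> U}"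
proof -
  have "openin (top_of_set X) (X \<inter> (f^^n) -` U)"
    by (rule continuous_openin_preimage[OF fcont _ assms]) (auto intro: fin)
  moreover have "X \<inter> (f^^n) -` U = {y\<in>X. (f^^n) y \<in> U}" by auto
  ultimately show ?thesis by simp
qed

lemma construct:
  assumes "compact X"
    and tr: "\<And>U V. openin (top_of_set X) U \<Longrightarrow> U \<noteq> {} \<Longrightarrow> openin (top_of_set X) V \<Longrightarrow> V \<noteq> {} \<Longrightarrow> hit_UV f U V \<noteq> {}"
    and "X \<noteq> {}"
  shows "\<exists>x\<in>X. \<forall>U. openin (top_of_set X) U \<and> U \<noteq> {} \<longrightarrow> (\<exists>B. openin (top_of_set X) B \<and> B \<noteq> {} \<and> B \<subseteq> U \<and> hit_UV f B B \<subseteq> diff_set (hit_xU f x U))"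
proof -
  have "\<exists>E. finite E \<and> E \<subseteq> X \<and> X \<subseteq> (\<Union>e\<in>E. ball e (inverse (Suc k)))" for k
  proof -
    have "X \<subseteq> (\<Union>e\<in>X. ball e (inverse (Suc k)))"
      by (auto intro!: bexI)
    then obtain C where "C \<subseteq> X" "finite C" "X \<subseteq> (\<Union>c\<in>C. ball c (inverse (Suc k)))"
      using compactE_image[OF \<open>compact X\<close>, of X "\<lambda>e. ball e (inverse (Suc k))"] by auto
    then show ?thesis by blast
  qed
  then obtain E where E: "\<And>k. finite (E k)" "\<And>k. E k \<subseteq> X" "\<And>k. X \<subseteq> (\<Union>e\<in>E k. ball e (inverse (Suc k)))"
    by metis
  define Bs where "Bs = (\<Union>k. (\<lambda>e. X \<inter> ball e (inverse (Suc k))) ` E k)"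
  have Bs_count: "countable Bs" unfolding Bs_def
    by (intro countable_UN countable_image) (auto intro: countable_finite E(1))
  have Bs_open: "openin (top_of_set X) B \<and> B \<noteq> {}" if "B \<in> Bs" for B
  proof -
    obtain k e where "e \<in> E k" "B = X \<inter> ball e (inverse (Suc k))" using \<open>B \<in> Bs\<close> unfolding Bs_def by blast
    moreover have "e \<in> X \<inter> ball e (inverse (Suc k))" using E(2) \<open>e \<in> E k\<close> by auto
    ultimately show ?thesis by (auto simp: openin_open_Int)
  qed
  define G where "G B n = {x\<in>X. \<exists>d\<ge>1. (f^^d) x \<in> B \<and> (f^^(d+n)) x \<in> B}" for B n
  define GG where "GG = (\<lambda>(B,n). G B n) ` {(B,n). B \<in> Bs \<and> n \<in> hit_UV f B B}"
  have GG_count: "countable GG"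
  proof -
    have "{(B,n). B \<in> Bs \<and> n \<in> hit_UV f B B} \<subseteq> Bs \<times> UNIV" by auto
    moreover have "countable (Bs \<times> (UNIV::nat set))" using Bs_count by simp
    ultimately show ?thesis unfolding GG_def
      by (intro countable_image) (rule countable_subset)
  qed
  have G_open: "openin (top_of_set X) (G B n)" if "openin (top_of_set X) B" for B n
  proof -
    have "G B n = (\<Union>d\<in>{1..}. {y\<in>X. (f^^d) y \<in> B} \<inter> {y\<in>X. (f^^(d+n)) y \<in> B})"
      unfolding G_def by auto
    then show ?thesis using pre_open[OF that] by (auto intro!: openin_Union openin_Int)
  qed
  have G_dense: "G B n \<inter> T \<noteq> {}" if hB: "B \<in> Bs" "n \<in> hit_UV f B B"
     "openin (top_of_set X) T" "T \<noteq> {}" for B n T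
  proof -
    have B: "openin (top_of_set X) B" "B \<noteq> {}" using Bs_open hB(1) by auto
    define V where "V = B \<inter> {y\<in>X. (f^^n) y \<in> B}"
    have Vo: "openin (top_of_set X) V" unfolding V_def using B pre_open by auto
    have "V \<noteq> {}" using hB(2) openin_subset[OF B(1)] unfolding V_def hit_UV_def by auto
    then obtain t where "t \<in> hit_UV f T V" using tr[OF hB(3,4) Vo] by auto
    then obtain y where y: "t \<ge> 1" "y \<in> T" "(f^^t) y \<in> V" unfolding hit_UV_def by auto
    have "(f^^(t+n)) y = (f^^n) ((f^^t) y)" by (metis add.commute comp_apply funpow_add)
    then have "y \<in> G B n" using y openin_subset[OF hB(3)] unfolding G_def V_def by auto
    then show ?thesis using y by auto
  qed
  have Xc: "compact_space (top_of_set X)"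
    using \<open>compact X\<close> by (simp add: compact_space_subtopology)
  have Xh: "Hausdorff_space (top_of_set X)"
    by (simp add: Hausdorff_space_subtopology)
  have "top_of_set X closure_of \<Inter>GG = topspace (top_of_set X)"
  proof (rule Baire_category)
    show "completely_metrizable_space (top_of_set X) \<or> locally_compact_space (top_of_set X) \<and> regular_space (top_of_set X)"
      using Xc Xh compact_imp_locally_compact_space compact_Hausdorff_imp_regular_space by blast
    show "countable GG" by (rule GG_count)
    fix T assume "T \<in> GG"
    then obtain B n where T: "T = G B n" "B \<in> Bs" "n \<in> hit_UV f B B" unfolding GG_def by auto
    show "openin (top_of_set X) T \<and> top_of_set X closure_of T = topspace (top_of_set X)"
      unfolding dense_intersects_open using T G_open Bs_open G_dense by auto
  qed
  then have "X \<inter> \<Inter>GG \<noteq> {}"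
    using \<open>X \<noteq> {}\<close> by (metis closure_of_empty closure_of_restrict topspace_euclidean_subtopology)
  then obtain x where x: "x \<in> X" "x \<in> \<Inter>GG" by auto
  show ?thesis
  proof (intro bexI[OF _ x(1)] allI impI)
    fix U assume U: "openin (top_of_set X) U \<and> U \<noteq> {}"
    then obtain p where p: "p \<in> U" by auto
    obtain W where W: "open W" "U = X \<inter> W" using U by (auto simp: openin_open)
    then obtain r where r: "r > 0" "ball p r \<subseteq> W" using p open_contains_ball by blast
    obtain k where k: "inverse (real (Suc k)) < r/2" using reals_Archimedean[of "r/2"] r by auto
    have "p \<in> X" using p W by auto
    then obtain e where e: "e \<in> E k" "p \<in> ball e (inverse (Suc k))" using E(3)[of k] by auto
    define B where "B = X \<inter> ball e (inverse (Suc k))"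
    have BB: "B \<in> Bs" unfolding Bs_def B_def using e by auto
    have BU: "B \<subseteq> U"
    proof
      fix y assume "y \<in> B"
      then have "y \<in> X" "dist e y < inverse (Suc k)" unfolding B_def by auto
      moreover have "dist e p < inverse (Suc k)" using e by auto
      ultimately have "dist p y < r" using k dist_triangle[of p y e] by (simp add: dist_commute)
      then show "y \<in> U" using r W \<open>y \<in> X\<close> by auto
    qed
    have "hit_UV f B B \<subseteq> diff_set (hit_xU f x U)"
    proof
      fix n assume n: "n \<in> hit_UV f B B"
      then have "x \<in> G B n" using x(2) BB unfolding GG_def by auto
      then obtain d where d: "d \<ge> 1" "(f^^d) x \<in> B" "(f^^(d+n)) x \<in> B" unfolding G_def by auto
      have "n \<ge> 1" using n unfolding hit_UV_def by auto
      then show "n \<in> diff_set (hit_xU f x U)"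
        unfolding diff_set_def hit_xU_def using d BU
        by (intro CollectI exI[of _ "d+n"] exI[of _ d]) auto
    qed
    then show "\<exists>B. openin (top_of_set X) B \<and> B \<noteq> {} \<and> B \<subseteq> U \<and> hit_UV f B B \<subseteq> diff_set (hit_xU f x U)"
      using Bs_open[OF BB] BU by blast
  qed
qed


lemma funpow_pair: "((\<lambda>(x, y). (f x, f y)) ^^ n) (a, b) = ((f^^n) a, (f^^n) b)"
  by (induction n) auto

definition WM where
  "WM \<longleftrightarrow> (\<forall>U1 V1 U2 V2. openin (top_of_set X) U1 \<and> U1 \<noteq> {} \<and> openin (top_of_set X) V1 \<and> V1 \<noteq> {}
      \<and> openin (top_of_set X) U2 \<and> U2 \<noteq> {} \<and> openin (top_of_set X) V2 \<and> V2 \<noteq> {}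
      \<longrightarrow> hit_UV f U1 V1 \<inter> hit_UV f U2 V2 \<noteq> {})"

lemma hit_prod: "hit_UV (\<lambda>(x, y). (f x, f y)) (U1 \<times> U2) (V1 \<times> V2) = hit_UV f U1 V1 \<inter> hit_UV f U2 V2"
  unfolding hit_UV_def by (auto simp: funpow_pair)

lemma hit_mono: "U \<subseteq> U' \<Longrightarrow> V \<subseteq> V' \<Longrightarrow> hit_UV g U V \<subseteq> hit_UV g U' V'"
  unfolding hit_UV_def by auto

lemma box:
  assumes "openin (top_of_set (X \<times> X)) W" "W \<noteq> {}"
  obtains U1 U2 where "openin (top_of_set X) U1" "openin (top_of_set X) U2" "U1 \<noteq> {}" "U2 \<noteq> {}" "U1 \<times> U2 \<subseteq> W"
proof -
  obtain T where T: "open T" "W = (X \<times> X) \<inter> T" using assms(1) by (auto simp: openin_open)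
  obtain p q where pq: "(p,q) \<in> W" using assms(2) by auto
  then obtain A B where AB: "open A" "open B" "(p,q) \<in> A \<times> B" "A \<times> B \<subseteq> T"
    using T open_prod_elim[of T "(p,q)"] by auto
  show ?thesis
  proof (rule that[of "X \<inter> A" "X \<inter> B"])
    show "openin (top_of_set X) (X \<inter> A)" "openin (top_of_set X) (X \<inter> B)"
      using AB by (auto simp: openin_open_Int)
    show "X \<inter> A \<noteq> {}" "X \<inter> B \<noteq> {}" using pq T AB by auto
    show "(X \<inter> A) \<times> (X \<inter> B) \<subseteq> W" using T AB by auto
  qed
qed

lemma wm_iff: "weakly_mixing X f \<longleftrightarrow> WM"
proof
  assume "weakly_mixing X f"
  then have T: "\<And>U V. openin (top_of_set (X \<times> X)) U \<Longrightarrow> U \<noteq> {} \<Longrightarrow> openin (top_of_set (X \<times> X)) V \<Longrightarrow> V \<noteq> {}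
      \<Longrightarrow> hit_UV (\<lambda>(x, y). (f x, f y)) U V \<noteq> {}"
    unfolding weakly_mixing_def top_transitive_def by blast
  show WM unfolding WM_def
  proof (intro allI impI)
    fix U1 V1 U2 V2 assume h: "openin (top_of_set X) U1 \<and> U1 \<noteq> {} \<and> openin (top_of_set X) V1 \<and> V1 \<noteq> {}
      \<and> openin (top_of_set X) U2 \<and> U2 \<noteq> {} \<and> openin (top_of_set X) V2 \<and> V2 \<noteq> {}"
    have "hit_UV (\<lambda>(x, y). (f x, f y)) (U1 \<times> U2) (V1 \<times> V2) \<noteq> {}"
      by (rule T) (use h in \<open>auto intro: openin_Times\<close>)
    then show "hit_UV f U1 V1 \<inter> hit_UV f U2 V2 \<noteq> {}" by (simp add: hit_prod)
  qed
next
  assume wm: WM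
  show "weakly_mixing X f" unfolding weakly_mixing_def top_transitive_def
  proof (intro allI impI)
    fix U V assume h: "openin (top_of_set (X \<times> X)) U \<and> U \<noteq> {} \<and> openin (top_of_set (X \<times> X)) V \<and> V \<noteq> {}"
    obtain U1 U2 where U: "openin (top_of_set X) U1" "openin (top_of_set X) U2" "U1 \<noteq> {}" "U2 \<noteq> {}" "U1 \<times> U2 \<subseteq> U"
      using h by (elim conjE box) blast
    obtain V1 V2 where V: "openin (top_of_set X) V1" "openin (top_of_set X) V2" "V1 \<noteq> {}" "V2 \<noteq> {}" "V1 \<times> V2 \<subseteq> V"
      using h by (elim conjE box) blast
    have "hit_UV f U1 V1 \<inter> hit_UV f U2 V2 \<noteq> {}" using wm U V unfolding WM_def by blast
    then have "hit_UV (\<lambda>(x, y). (f x, f y)) (U1 \<times> U2) (V1 \<times> V2) \<noteq> {}" by (simp add: hit_prod)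
    moreover have "hit_UV (\<lambda>(x, y). (f x, f y)) (U1 \<times> U2) (V1 \<times> V2) \<subseteq> hit_UV (\<lambda>(x, y). (f x, f y)) U V"
      by (rule hit_mono) (use U V in auto)
    ultimately show "hit_UV (\<lambda>(x, y). (f x, f y)) U V \<noteq> {}" by blast
  qed
qed

lemma WM_trans: "WM \<Longrightarrow> openin (top_of_set X) U \<Longrightarrow> U \<noteq> {} \<Longrightarrow> openin (top_of_set X) V \<Longrightarrow> V \<noteq> {} \<Longrightarrow> hit_UV f U V \<noteq> {}"
  unfolding WM_def by blast

lemma pair_lemma:
  assumes WM "openin (top_of_set X) U1" "U1 \<noteq> {}" "openin (top_of_set X) V1" "V1 \<noteq> {}"
      "openin (top_of_set X) U2" "U2 \<noteq> {}" "openin (top_of_set X) V2" "V2 \<noteq> {}"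
  shows "\<exists>U V. openin (top_of_set X) U \<and> U \<noteq> {} \<and> openin (top_of_set X) V \<and> V \<noteq> {} \<and>
     hit_UV f U V \<subseteq> hit_UV f U1 V1 \<inter> hit_UV f U2 V2"
proof -
  obtain k where k: "k \<in> hit_UV f U1 U2" "k \<in> hit_UV f V1 V2" using assms unfolding WM_def by blast
  define U where "U = U1 \<inter> {y\<in>X. (f^^k) y \<in> U2}"
  define V where "V = V1 \<inter> {y\<in>X. (f^^k) y \<in> V2}"
  have "openin (top_of_set X) U" "openin (top_of_set X) V"
    unfolding U_def V_def using assms pre_open by auto
  moreover have "U \<noteq> {}" "V \<noteq> {}"
    using k openin_subset[OF assms(2)] openin_subset[OF assms(4)] unfolding U_def V_def hit_UV_def by auto
  moreover have "hit_UV f U V \<subseteq> hit_UV f U1 V1 \<inter> hit_UV f U2 V2"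
  proof
    fix n assume "n \<in> hit_UV f U V"
    then obtain y where y: "n \<ge> 1" "y \<in> U" "(f^^n) y \<in> V" unfolding hit_UV_def by auto
    have "(f^^n) ((f^^k) y) = (f^^k) ((f^^n) y)" by (metis add.commute comp_apply funpow_add)
    have "n \<in> hit_UV f U1 V1" using y unfolding hit_UV_def U_def V_def by auto
    moreover have "n \<in> hit_UV f U2 V2" unfolding hit_UV_def
      using y \<open>(f^^n) ((f^^k) y) = (f^^k) ((f^^n) y)\<close> unfolding U_def V_def by (auto intro!: bexI[of _ "(f^^k) y"])
    ultimately show "n \<in> hit_UV f U1 V1 \<inter> hit_UV f U2 V2" by blast
  qed
  ultimately show ?thesis by blast
qed

lemma pre_nonempty:
  assumes tr: "\<And>U V. openin (top_of_set X) U \<Longrightarrow> U \<noteq> {} \<Longrightarrow> openin (top_of_set X) V \<Longrightarrow> V \<noteq> {} \<Longrightarrow> hit_UV f U V \<noteq> {}"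
    and V: "openin (top_of_set X) V" "V \<noteq> {}"
  shows "{y\<in>X. (f^^j) y \<in> V} \<noteq> {}"
proof (induction j)
  case 0 then show ?case using V openin_subset[OF V(1)] by auto
next
  case (Suc j)
  have "X \<noteq> {}" using V openin_subset[OF V(1)] by auto
  then obtain t where "t \<in> hit_UV f X {y\<in>X. (f^^j) y \<in> V}"
    using tr[OF _ _ pre_open[OF V(1)] Suc, of X] by auto
  then obtain y where y: "t \<ge> 1" "y \<in> X" "(f^^j) ((f^^t) y) \<in> V" unfolding hit_UV_def by auto
  obtain s where s: "t = Suc s" using y(1) by (cases t) auto
  have "(f^^(Suc j)) ((f^^s) y) = (f^^j) (f ((f^^s) y))"
    by (simp only: funpow_Suc_right comp_apply)
  also have "\<dots> = (f^^j) ((f^^t) y)" using s by simp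
  finally have "(f^^s) y \<in> {y\<in>X. (f^^(Suc j)) y \<in> V}" using y fin by simp
  then show ?case by blast
qed

lemma claim:
  assumes WM "openin (top_of_set X) U" "U \<noteq> {}" "openin (top_of_set X) V" "V \<noteq> {}"
  shows "\<exists>U' V'. openin (top_of_set X) U' \<and> U' \<noteq> {} \<and> openin (top_of_set X) V' \<and> V' \<noteq> {} \<and>
     (\<forall>n\<in>hit_UV f U' V'. \<forall>j\<le>L. n + j \<in> hit_UV f U V)"
proof (induction L)
  case 0 show ?case by (rule exI[of _ U], rule exI[of _ V]) (use assms in simp)
next
  case (Suc L)
  then obtain U' V' where UV: "openin (top_of_set X) U'" "U' \<noteq> {}" "openin (top_of_set X) V'" "V' \<noteq> {}"
     "\<forall>n\<in>hit_UV f U' V'. \<forall>j\<le>L. n + j \<in> hit_UV f U V" by blast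
  define P where "P = {y\<in>X. (f^^(Suc L)) y \<in> V}"
  have P: "openin (top_of_set X) P" "P \<noteq> {}"
    unfolding P_def using pre_open[OF assms(4), of "Suc L"] pre_nonempty[OF WM_trans[OF assms(1)] assms(4,5), of "Suc L"] by auto
  obtain U'' V'' where UV2: "openin (top_of_set X) U''" "U'' \<noteq> {}" "openin (top_of_set X) V''" "V'' \<noteq> {}"
     "hit_UV f U'' V'' \<subseteq> hit_UV f U' V' \<inter> hit_UV f U P"
    using pair_lemma[OF assms(1) UV(1-4) assms(2,3) P] by blast
  have "\<forall>n\<in>hit_UV f U'' V''. \<forall>j\<le>Suc L. n + j \<in> hit_UV f U V"
  proof (intro ballI allI impI)
    fix n j assume n: "n \<in> hit_UV f U'' V''" and j: "j \<le> Suc L"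
    show "n + j \<in> hit_UV f U V"
    proof (cases "j \<le> L")
      case True
      have "n \<in> hit_UV f U' V'" using UV2(5) n by blast
      then show ?thesis using UV(5) True by blast
    next
      case False
      then have j: "j = Suc L" using j by auto
      have "n \<in> hit_UV f U P" using UV2(5) n by blast
      then obtain y where y: "n \<ge> 1" "y \<in> U" "(f^^(Suc L)) ((f^^n) y) \<in> V" unfolding hit_UV_def P_def by auto
      have "(f^^(Suc L)) ((f^^n) y) = (f^^(n + Suc L)) y" by (metis add.commute comp_apply funpow_add)
      then show ?thesis using y j unfolding hit_UV_def by auto
    qed
  qed
  then show ?case using UV2 by blast
qed

lemma WM_thick:
  assumes WM "openin (top_of_set X) U" "U \<noteq> {}"
  shows "hit_UV f U U \<in> thick_family"
  unfolding thick_family_def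
proof (intro CollectI conjI allI)
  show "hit_UV f U U \<subseteq> posnat" unfolding hit_UV_def posnat_def by auto
  fix L
  obtain U' V' where UV: "openin (top_of_set X) U'" "U' \<noteq> {}" "openin (top_of_set X) V'" "V' \<noteq> {}"
     "\<forall>n\<in>hit_UV f U' V'. \<forall>j\<le>L. n + j \<in> hit_UV f U U" using claim[OF assms assms(2,3), of L] by (elim exE conjE) (rule that; assumption)
  obtain a where a: "a \<in> hit_UV f U' V'" using WM_trans[OF assms(1) UV(1-4)] by auto
  have "a \<in> posnat" using a unfolding hit_UV_def posnat_def by auto
  moreover have "{a..a+L} \<subseteq> hit_UV f U U"
  proof
    fix m assume "m \<in> {a..a+L}"
    then obtain j where m: "m = a + j" "j \<le> L" by (intro that[of "m-a"]) auto
    have "\<forall>j\<le>L. a + j \<in> hit_UV f U U" using UV(5) a by (rule bspec)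
    then have "a + j \<in> hit_UV f U U" using m(2) by blast
    then show "m \<in> hit_UV f U U" using m(1) by simp
  qed
  ultimately show "\<exists>a\<in>posnat. {a..a + L} \<subseteq> hit_UV f U U" by blast
qed


lemma fp: "(f^^m) ((f^^k) z) = (f^^(m+k)) z"
  by (simp add: funpow_add)

lemma posnat_infinite: "infinite posnat"
  unfolding posnat_def infinite_nat_iff_unbounded_le
proof
  fix m :: nat show "\<exists>n\<ge>m. n \<in> {n. 1 \<le> n}" by (rule exI[of _ "Suc m"]) simp
qed

lemma diff_set_posnat: "diff_set F \<subseteq> posnat"
  unfolding diff_set_def posnat_def by auto

lemma unbounded:
  assumes "diff_set F \<in> thick_family \<or> diff_set F \<in> cofinite_family"
  shows "\<exists>b\<in>F. b > M"
proof (rule ccontr)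
  assume "\<not> (\<exists>b\<in>F. b > M)"
  then have D: "diff_set F \<subseteq> {..M}" unfolding diff_set_def by force
  show False using assms
  proof
    assume "diff_set F \<in> thick_family"
    then obtain a where "a \<in> posnat" "{a..a+M} \<subseteq> diff_set F" unfolding thick_family_def by blast
    then have "a + M \<in> diff_set F" "a \<ge> 1" unfolding posnat_def by auto
    then have "a + M \<le> M" "a \<ge> 1" using D by auto
    then show False by simp
  next
    assume "diff_set F \<in> cofinite_family"
    then have "finite (posnat - diff_set F)" unfolding cofinite_family_def by blast
    moreover have "posnat \<subseteq> (posnat - diff_set F) \<union> {..M}" using D by auto
    ultimately have "finite posnat" by (meson finite_UnI finite_atMost finite_subset)
    then show False using posnat_infinite by blast
  qed
qed

lemma shift:
  assumes "Ob \<subseteq> {y. (f^^a) y \<in> U \<and> (f^^b) y \<in> V}" "a < b" "n \<in> diff_set (hit_xU f x Ob)"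
  shows "n + (b - a) \<in> hit_UV f U V"
proof -
  obtain c d where cd: "n = c - d" "c > d" "(f^^c) x \<in> Ob" "(f^^d) x \<in> Ob"
    using assms(3) unfolding diff_set_def hit_xU_def by blast
  have "(f^^a) ((f^^d) x) \<in> U" using cd(4) assms(1) by blast
  have "(f^^(n + (b - a))) ((f^^a) ((f^^d) x)) = (f^^(n + (b - a) + (a + d))) x"
    by (simp only: fp)
  also have "n + (b - a) + (a + d) = b + c" using cd(1,2) assms(2) by arith
  also have "(f^^(b + c)) x = (f^^b) ((f^^c) x)" by (simp only: fp)
  finally have "(f^^(n + (b - a))) ((f^^a) ((f^^d) x)) \<in> V" using cd(3) assms(1) by auto
  moreover have "n \<ge> 1" using cd(1,2) by auto
  ultimately show ?thesis unfolding hit_UV_def using \<open>(f^^a) ((f^^d) x) \<in> U\<close> by auto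
qed

lemma two_times:
  assumes "x \<in> X" "openin (top_of_set X) U" "U \<noteq> {}" "openin (top_of_set X) V" "V \<noteq> {}"
    and D: "\<And>W. openin (top_of_set X) W \<Longrightarrow> W \<noteq> {} \<Longrightarrow> diff_set (hit_xU f x W) \<in> thick_family \<or> diff_set (hit_xU f x W) \<in> cofinite_family"
  obtains a b where "a < b" "(f^^a) x \<in> U" "(f^^b) x \<in> V"
proof -
  obtain a where "a \<in> hit_xU f x U" using unbounded[OF D[OF assms(2,3)], of 0] by blast
  moreover obtain b where "b \<in> hit_xU f x V" "b > a" using unbounded[OF D[OF assms(4,5)], of a] by blast
  ultimately show ?thesis using that unfolding hit_xU_def by blast
qed

lemma wm_from_point:
  assumes "x \<in> X" and D: "\<And>W. openin (top_of_set X) W \<Longrightarrow> W \<noteq> {} \<Longrightarrow> diff_set (hit_xU f x W) \<in> thick_family"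
  shows WM
  unfolding WM_def
proof (intro allI impI)
  fix U1 V1 U2 V2 assume h: "openin (top_of_set X) U1 \<and> U1 \<noteq> {} \<and> openin (top_of_set X) V1 \<and> V1 \<noteq> {}
      \<and> openin (top_of_set X) U2 \<and> U2 \<noteq> {} \<and> openin (top_of_set X) V2 \<and> V2 \<noteq> {}"
  have D': "\<And>W. openin (top_of_set X) W \<Longrightarrow> W \<noteq> {} \<Longrightarrow> diff_set (hit_xU f x W) \<in> thick_family \<or> diff_set (hit_xU f x W) \<in> cofinite_family"
    using D by blast
  obtain a1 b1 where ab1: "a1 < b1" "(f^^a1) x \<in> U1" "(f^^b1) x \<in> V1" using two_times[OF assms(1) _ _ _ _ D'] h by metis
  obtain a2 b2 where ab2: "a2 < b2" "(f^^a2) x \<in> U2" "(f^^b2) x \<in> V2" using two_times[OF assms(1) _ _ _ _ D'] h by metis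
  define Ob where "Ob = {y\<in>X. (f^^a1) y \<in> U1} \<inter> {y\<in>X. (f^^b1) y \<in> V1} \<inter> {y\<in>X. (f^^a2) y \<in> U2} \<inter> {y\<in>X. (f^^b2) y \<in> V2}"
  have "openin (top_of_set X) Ob" unfolding Ob_def using h pre_open by (intro openin_Int) auto
  moreover have "x \<in> Ob" unfolding Ob_def using ab1 ab2 assms(1) by auto
  ultimately have "diff_set (hit_xU f x Ob) \<in> thick_family" using D by blast
  then obtain m where m: "{m..m+((b1-a1)+(b2-a2))} \<subseteq> diff_set (hit_xU f x Ob)" unfolding thick_family_def by blast
  have "m + (b2 - a2) \<in> diff_set (hit_xU f x Ob)" "m + (b1 - a1) \<in> diff_set (hit_xU f x Ob)"
    using m by auto
  moreover have "Ob \<subseteq> {y. (f^^a1) y \<in> U1 \<and> (f^^b1) y \<in> V1}" "Ob \<subseteq> {y. (f^^a2) y \<in> U2 \<and> (f^^b2) y \<in> V2}"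
    unfolding Ob_def by auto
  ultimately have "m + (b2 - a2) + (b1 - a1) \<in> hit_UV f U1 V1" "m + (b1 - a1) + (b2 - a2) \<in> hit_UV f U2 V2"
    using shift ab1(1) ab2(1) by blast+
  then show "hit_UV f U1 V1 \<inter> hit_UV f U2 V2 \<noteq> {}" by (metis IntI add.commute add.left_commute empty_iff)
qed

lemma sm_from_point:
  assumes "x \<in> X" and D: "\<And>W. openin (top_of_set X) W \<Longrightarrow> W \<noteq> {} \<Longrightarrow> diff_set (hit_xU f x W) \<in> cofinite_family"
  shows "strongly_mixing X f"
  unfolding strongly_mixing_def
proof (intro allI impI)
  fix U V assume h: "openin (top_of_set X) U \<and> U \<noteq> {} \<and> openin (top_of_set X) V \<and> V \<noteq> {}"
  have D': "\<And>W. openin (top_of_set X) W \<Longrightarrow> W \<noteq> {} \<Longrightarrow> diff_set (hit_xU f x W) \<in> thick_family \<or> diff_set (hit_xU f x W) \<in> cofinite_family"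
    using D by blast
  obtain a b where ab: "a < b" "(f^^a) x \<in> U" "(f^^b) x \<in> V" using two_times[OF assms(1) _ _ _ _ D'] h by metis
  define Ob where "Ob = {y\<in>X. (f^^a) y \<in> U} \<inter> {y\<in>X. (f^^b) y \<in> V}"
  have "openin (top_of_set X) Ob" unfolding Ob_def using h pre_open by (intro openin_Int) auto
  moreover have "x \<in> Ob" unfolding Ob_def using ab assms(1) by auto
  ultimately have "diff_set (hit_xU f x Ob) \<in> cofinite_family" using D by blast
  then have fin: "finite (posnat - diff_set (hit_xU f x Ob))" unfolding cofinite_family_def by blast
  have "posnat - hit_UV f U V \<subseteq> {..b - a} \<union> (\<lambda>k. k + (b - a)) ` (posnat - diff_set (hit_xU f x Ob))"
  proof
    fix n assume n: "n \<in> posnat - hit_UV f U V"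
    show "n \<in> {..b - a} \<union> (\<lambda>k. k + (b - a)) ` (posnat - diff_set (hit_xU f x Ob))"
    proof (cases "n \<le> b - a")
      case False
      then have e: "n = (n - (b - a)) + (b - a)" "n - (b - a) \<in> posnat" unfolding posnat_def by auto
      have "n - (b - a) \<notin> diff_set (hit_xU f x Ob)"
      proof
        assume "n - (b - a) \<in> diff_set (hit_xU f x Ob)"
        then have "n - (b - a) + (b - a) \<in> hit_UV f U V" using shift[of Ob a U b V] ab(1) unfolding Ob_def by auto
        then show False using n e(1) by simp
      qed
      then show ?thesis using e by blast
    qed simp
  qed
  then have "finite (posnat - hit_UV f U V)" using fin by (meson finite_UnI finite_atMost finite_imageI finite_subset)
  moreover have "hit_UV f U V \<subseteq> posnat" unfolding hit_UV_def posnat_def by auto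
  ultimately show "hit_UV f U V \<in> cofinite_family" unfolding cofinite_family_def by blast
qed

end

theorem theorem3p7:
  fixes X :: "'a::metric_space set" and f :: "'a \<Rightarrow> 'a"
  assumes "compact X" and "X \<noteq> {}"
    and "continuous_on X f" and "f ` X \<subseteq> X"
  shows "(weakly_mixing X f \<longleftrightarrow> F_point_transitive X f (nabla thick_family)) \<and>
         (strongly_mixing X f \<longleftrightarrow> F_point_transitive X f (nabla cofinite_family))"
proof -
  interpret dsys X f using assms(3,4) by unfold_locales
  have hx: "hit_xU f x U \<subseteq> posnat" for x U unfolding hit_xU_def posnat_def by auto
  have part1: "weakly_mixing X f \<longleftrightarrow> F_point_transitive X f (nabla thick_family)"
  proof
    assume "weakly_mixing X f"
    then have wm: WM using wm_iff by blast
    obtain x where x: "x \<in> X" "\<forall>U. openin (top_of_set X) U \<and> U \<noteq> {} \<longrightarrow> (\<exists>B. openin (top_of_set X) B \<and> B \<noteq> {} \<and> B \<subseteq> U \<and> hit_UV f B B \<subseteq> diff_set (hit_xU f x U))"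
      using construct[OF assms(1) WM_trans[OF wm] assms(2)] by blast
    show "F_point_transitive X f (nabla thick_family)"
      unfolding F_point_transitive_def F_transitive_point_def
    proof (intro bexI[OF _ x(1)] allI impI)
      fix U assume U: "openin (top_of_set X) U \<and> U \<noteq> {}"
      then obtain B where B: "openin (top_of_set X) B" "B \<noteq> {}" "hit_UV f B B \<subseteq> diff_set (hit_xU f x U)"
        using x(2) by blast
      have "hit_UV f B B \<in> thick_family" using WM_thick[OF wm B(1,2)] .
      then have "diff_set (hit_xU f x U) \<in> thick_family"
        using B(3) diff_set_posnat unfolding thick_family_def by blast
      then show "hit_xU f x U \<in> nabla thick_family" unfolding nabla_def using hx by blast
    qed
  next
    assume "F_point_transitive X f (nabla thick_family)"
    then obtain x where "x \<in> X" "\<And>W. openin (top_of_set X) W \<Longrightarrow> W \<noteq> {} \<Longrightarrow> diff_set (hit_xU f x W) \<in> thick_family"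
      unfolding F_point_transitive_def F_transitive_point_def nabla_def by blast
    then have WM by (rule wm_from_point)
    then show "weakly_mixing X f" using wm_iff by blast
  qed
  have part2: "strongly_mixing X f \<longleftrightarrow> F_point_transitive X f (nabla cofinite_family)"
  proof
    assume sm: "strongly_mixing X f"
    have tr: "hit_UV f U V \<noteq> {}" if "openin (top_of_set X) U" "U \<noteq> {}" "openin (top_of_set X) V" "V \<noteq> {}" for U V
    proof
      assume "hit_UV f U V = {}"
      moreover have "hit_UV f U V \<in> cofinite_family" using sm that unfolding strongly_mixing_def by blast
      ultimately show False using posnat_infinite unfolding cofinite_family_def by simp
    qed
    obtain x where x: "x \<in> X" "\<forall>U. openin (top_of_set X) U \<and> U \<noteq> {} \<longrightarrow> (\<exists>B. openin (top_of_set X) B \<and> B \<noteq> {} \<and> B \<subseteq> U \<and> hit_UV f B B \<subseteq> diff_set (hit_xU f x U))"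
      using construct[OF assms(1) tr assms(2)] by blast
    show "F_point_transitive X f (nabla cofinite_family)"
      unfolding F_point_transitive_def F_transitive_point_def
    proof (intro bexI[OF _ x(1)] allI impI)
      fix U assume U: "openin (top_of_set X) U \<and> U \<noteq> {}"
      then obtain B where B: "openin (top_of_set X) B" "B \<noteq> {}" "hit_UV f B B \<subseteq> diff_set (hit_xU f x U)"
        using x(2) by blast
      have "hit_UV f B B \<in> cofinite_family" using sm B(1,2) unfolding strongly_mixing_def by blast
      then have "finite (posnat - hit_UV f B B)" unfolding cofinite_family_def by blast
      moreover have "posnat - diff_set (hit_xU f x U) \<subseteq> posnat - hit_UV f B B" using B(3) by blast
      ultimately have "finite (posnat - diff_set (hit_xU f x U))" by (rule finite_subset[rotated])
      then have "diff_set (hit_xU f x U) \<in> cofinite_family"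
        using diff_set_posnat unfolding cofinite_family_def by blast
      then show "hit_xU f x U \<in> nabla cofinite_family" unfolding nabla_def using hx by blast
    qed
  next
    assume "F_point_transitive X f (nabla cofinite_family)"
    then obtain x where "x \<in> X" "\<And>W. openin (top_of_set X) W \<Longrightarrow> W \<noteq> {} \<Longrightarrow> diff_set (hit_xU f x W) \<in> cofinite_family"
      unfolding F_point_transitive_def F_transitive_point_def nabla_def by blast
    then show "strongly_mixing X f" by (rule sm_from_point)
  qed
  show ?thesis using part1 part2 by blast
qed

end
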